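(* Let $\mathcal R_3=\{(0^m1^n2^k,3^m): m,n,k\ge0,\ n\neq k\ \wedge\ (m=k\vee m=n)\}\subseteq\{0,1,2\}^*\times\{3\}^*$. There is no probabilistic finite state transducer computing $\mathcal R_3$ with probability $\alpha$ for any $\alpha>1/2$; in fact, there is no probabilistic finite state transducer computing $\mathcal R_3$ with an isolated cutpoint.
   Context: A probabilistic finite state transducer (pfst) is a tuple $T=(Q,\Sigma_1,\Sigma_2,V,f,q_0,Q_{\rm acc},Q_{\rm rej})$ with finite state set $Q$, finite input/output alphabets $\Sigma_1,\Sigma_2$, initial state $q_0$, disjoint accepting/rejecting sets $Q_{\rm acc},Q_{\rm rej}\subseteq Q$ (the other states are non-halting). For each $a\in\Sigma_1\cup\{\ddagger,\$\}$ ($\ddagger,\$$ are end markers) there is a stochastic $Q\times Q$ matrix $V_a$ and an output function $f_a:Q\to\Sigma_2^*$; $V_\$$ puts all probability on halting states. On input $v$ the machine reads $\ddagger v\$$; in state $q$ reading $a$ it appends $f_a(q)$ to the output tape and moves to state $p$ with probability $(V_a)_{qp}$; if $p$ is accepting (rejecting) it halts and accepts with the current output (rejects). $T(w|v)$ is the probability of accepting with output $w$ on input $v$. For $\alpha>1/2$, $T$ computes $\mathcal R$ with probability $\alpha$ if for all $v,w$: $(v,w)\in\mathcal R\Rightarrow T(w|v)\ge\alpha$ and $(v,w)\notin\mathcal R\Rightarrow T(w|v)\le1-\alpha$. $T$ computes $\mathcal R$ with isolated cutpoint if there are $0<\alpha<1$ and $\varepsilon>0$ such that for all $v,w$: $(v,w)\in\mathcal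 R\Rightarrow T(w|v)\ge\alpha+\varepsilon$ and $(v,w)\notin\mathcal R\Rightarrow T(w|v)\le\alpha-\varepsilon$. *)

theory Defs
  imports Complex_Main
begin

text \<open>Extended input symbols: ordinary letters plus the two end markers
  (LEnd = double dagger, REnd = dollar).\<close>
datatype 'a sym = Sym 'a | LEnd | REnd

definition stochastic :: "('q::finite \<Rightarrow> 'q \<Rightarrow> real) \<Rightarrow> bool" where
  "stochastic M \<longleftrightarrow> (\<forall>q p. 0 \<le> M q p) \<and> (\<forall>q. (\<Sum>p\<in>UNIV. M q p) = 1)"

definition pfst ::
  "'a set \<Rightarrow> 'b set \<Rightarrow> ('a sym \<Rightarrow> 'q::finite \<Rightarrow> 'q \<Rightarrow> real) \<Rightarrow> ('a sym \<Rightarrow> 'q \<Rightarrow> 'b list)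
   \<Rightarrow> 'q \<Rightarrow> 'q set \<Rightarrow> 'q set \<Rightarrow> bool" where
  "pfst S1 S2 V f q0 Qa Qr \<longleftrightarrow>
     finite S1 \<and> finite S2 \<and> Qa \<inter> Qr = {} \<and>
     (\<forall>a \<in> Sym ` S1 \<union> {LEnd, REnd}. stochastic (V a) \<and> (\<forall>q. set (f a q) \<subseteq> S2)) \<and>
     (\<forall>q. (\<Sum>p\<in>Qa \<union> Qr. V REnd q p) = 1)"

text \<open>acc V f Qa Qr xs q w: probability that the machine, currently in the
  non-halting state q with empty remaining output to produce, reads xs and halts
  accepting with (remaining) output exactly w.\<close>
fun acc :: "('a sym \<Rightarrow> 'q::finite \<Rightarrow> 'q \<Rightarrow> real) \<Rightarrow> ('a sym \<Rightarrow> 'q \<Rightarrow> 'b list)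
   \<Rightarrow> 'q set \<Rightarrow> 'q set \<Rightarrow> 'a sym list \<Rightarrow> 'q \<Rightarrow> 'b list \<Rightarrow> real" where
  "acc V f Qa Qr [] q w = 0"
| "acc V f Qa Qr (a # xs) q w =
     (\<Sum>p\<in>UNIV. V a q p *
        (if p \<in> Qa then (if w = f a q then 1 else 0)
         else if p \<in> Qr then 0
         else if take (length (f a q)) w = f a q
              then acc V f Qa Qr xs p (drop (length (f a q)) w) else 0))"

definition Tprob :: "('a sym \<Rightarrow> 'q::finite \<Rightarrow> 'q \<Rightarrow> real) \<Rightarrow> ('a sym \<Rightarrow> 'q \<Rightarrow> 'b list)
   \<Rightarrow> 'q \<Rightarrow> 'q set \<Rightarrow> 'q set \<Rightarrow> 'b list \<Rightarrow> 'a list \<Rightarrow> real" where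
  "Tprob V f q0 Qa Qr w v =
     (if q0 \<in> Qa then (if w = [] then 1 else 0)
      else if q0 \<in> Qr then 0
      else acc V f Qa Qr (LEnd # map Sym v @ [REnd]) q0 w)"

definition computes_with_prob ::
  "'a set \<Rightarrow> 'b set \<Rightarrow> ('a sym \<Rightarrow> 'q::finite \<Rightarrow> 'q \<Rightarrow> real) \<Rightarrow> ('a sym \<Rightarrow> 'q \<Rightarrow> 'b list)
   \<Rightarrow> 'q \<Rightarrow> 'q set \<Rightarrow> 'q set \<Rightarrow> ('a list \<Rightarrow> 'b list \<Rightarrow> bool) \<Rightarrow> real \<Rightarrow> bool" where
  "computes_with_prob S1 S2 V f q0 Qa Qr R \<alpha> \<longleftrightarrow>
     (\<forall>v \<in> lists S1. \<forall>w \<in> lists S2.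
        (R v w \<longrightarrow> Tprob V f q0 Qa Qr w v \<ge> \<alpha>) \<and>
        (\<not> R v w \<longrightarrow> Tprob V f q0 Qa Qr w v \<le> 1 - \<alpha>))"

definition computes_isolated ::
  "'a set \<Rightarrow> 'b set \<Rightarrow> ('a sym \<Rightarrow> 'q::finite \<Rightarrow> 'q \<Rightarrow> real) \<Rightarrow> ('a sym \<Rightarrow> 'q \<Rightarrow> 'b list)
   \<Rightarrow> 'q \<Rightarrow> 'q set \<Rightarrow> 'q set \<Rightarrow> ('a list \<Rightarrow> 'b list \<Rightarrow> bool) \<Rightarrow> bool" where
  "computes_isolated S1 S2 V f q0 Qa Qr R \<longleftrightarrow>
     (\<exists>\<alpha> \<epsilon>. 0 < \<alpha> \<and> \<alpha> < 1 \<and> 0 < \<epsilon> \<and>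
       (\<forall>v \<in> lists S1. \<forall>w \<in> lists S2.
          (R v w \<longrightarrow> Tprob V f q0 Qa Qr w v \<ge> \<alpha> + \<epsilon>) \<and>
          (\<not> R v w \<longrightarrow> Tprob V f q0 Qa Qr w v \<le> \<alpha> - \<epsilon>)))"

definition R3 :: "nat list \<Rightarrow> nat list \<Rightarrow> bool" where
  "R3 v w \<longleftrightarrow> (\<exists>m n k. v = replicate m 0 @ replicate n 1 @ replicate k 2 \<and>
                          w = replicate m 3 \<and> n \<noteq> k \<and> (m = k \<or> m = n))"

end

theory Submission
  imports Defs "HOL-Analysis.Analysis"
begin

fun reach :: "('a sym \<Rightarrow> 'q::finite \<Rightarrow> 'q \<Rightarrow> real) \<Rightarrow> ('a sym \<Rightarrow> 'q \<Rightarrow> 'b list)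
   \<Rightarrow> 'q set \<Rightarrow> 'q set \<Rightarrow> 'a sym list \<Rightarrow> 'q \<Rightarrow> 'q \<Rightarrow> 'b list \<Rightarrow> real" where
  "reach V f Qa Qr [] q p u = (if p = q \<and> u = [] then 1 else 0)"
| "reach V f Qa Qr (a # xs) q p u =
     (\<Sum>p'\<in>UNIV. V a q p' *
        (if p' \<in> Qa then 0
         else if p' \<in> Qr then 0
         else if take (length (f a q)) u = f a q
              then reach V f Qa Qr xs p' p (drop (length (f a q)) u) else 0))"

lemma acc_nonneg:
  assumes "\<forall>a\<in>set xs. stochastic (V a)"
  shows "0 \<le> acc V f Qa Qr xs q w"
  using assms
proof (induction xs arbitrary: q w)
  case Nil then show ?case by simp
next
  case (Cons a xs)
  have "\<forall>q p. 0 \<le> V a q p" using Cons.prems by (simp add: stochastic_def)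
  then show ?case using Cons by (auto intro!: sum_nonneg mult_nonneg_nonneg)
qed

lemma reach_nonneg:
  assumes "\<forall>a\<in>set xs. stochastic (V a)"
  shows "0 \<le> reach V f Qa Qr xs q p u"
  using assms
proof (induction xs arbitrary: q u)
  case Nil then show ?case by simp
next
  case (Cons a xs)
  have "\<forall>q p. 0 \<le> V a q p" using Cons.prems by (simp add: stochastic_def)
  then show ?case using Cons by (auto intro!: sum_nonneg mult_nonneg_nonneg)
qed

lemma sum_drop_inj:
  fixes F :: "'b list \<Rightarrow> real"
  assumes "finite U" "\<And>U'. finite U' \<Longrightarrow> sum F U' \<le> 1"
  shows "(\<Sum>u\<in>U. if take L u = c then F (drop L u) else 0) \<le> 1"
proof -
  have "(\<Sum>u\<in>U. if take L u = c then F (drop L u) else 0) = (\<Sum>u\<in>{u\<in>U. take L u = c}. F (drop L u))"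
    using assms(1) by (simp add: sum.inter_filter)
  also have "\<dots> = sum F (drop L ` {u\<in>U. take L u = c})"
  proof (rule sum.reindex[symmetric, unfolded comp_def])
    show "inj_on (drop L) {u \<in> U. take L u = c}"
      by (rule inj_onI) (metis (mono_tags, lifting) append_take_drop_id mem_Collect_eq)
  qed
  also have "\<dots> \<le> 1" using assms by auto
  finally show ?thesis .
qed

lemma acc_sum_le1:
  assumes "\<forall>a\<in>set xs. stochastic (V a)" "finite U"
  shows "(\<Sum>u\<in>U. acc V f Qa Qr xs q u) \<le> 1"
  using assms
proof (induction xs arbitrary: q U)
  case Nil then show ?case by simp
next
  case (Cons a xs)
  have st: "\<forall>q p. 0 \<le> V a q p" "\<And>q. (\<Sum>p\<in>UNIV. V a q p) = 1" using Cons.prems by (auto simp: stochastic_def)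
  have "(\<Sum>u\<in>U. acc V f Qa Qr (a#xs) q u) = (\<Sum>p\<in>UNIV. V a q p * (\<Sum>u\<in>U.
        (if p \<in> Qa then (if u = f a q then 1 else 0)
         else if p \<in> Qr then 0
         else if take (length (f a q)) u = f a q
              then acc V f Qa Qr xs p (drop (length (f a q)) u) else 0)))"
    by (simp add: sum_distrib_left sum.swap[of _ U])
  also have "\<dots> \<le> (\<Sum>p\<in>UNIV. V a q p * 1)"
  proof (rule sum_mono, rule mult_left_mono)
    fix p
    show "0 \<le> V a q p" using st by auto
    show "(\<Sum>u\<in>U. (if p \<in> Qa then (if u = f a q then 1 else 0)
         else if p \<in> Qr then 0
         else if take (length (f a q)) u = f a q
              then acc V f Qa Qr xs p (drop (length (f a q)) u) else 0)) \<le> 1"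
    proof (cases "p \<in> Qa")
      case True
      then show ?thesis using Cons.prems(2)
        by (simp add: sum.delta' )
    next
      case False
      then show ?thesis
        using sum_drop_inj[OF Cons.prems(2), of "acc V f Qa Qr xs p"] Cons.IH Cons.prems
        by (cases "p \<in> Qr") auto
    qed
  qed
  also have "\<dots> = 1" using st by simp
  finally show ?case .
qed

lemma sum_drop_eq:
  fixes F :: "'b list \<Rightarrow> real"
  assumes "finite U"
  shows "(\<Sum>u\<in>U. if take L u = c then F (drop L u) else 0) = sum F (drop L ` {u\<in>U. take L u = c})"
proof -
  have "(\<Sum>u\<in>U. if take L u = c then F (drop L u) else 0) = (\<Sum>u\<in>{u\<in>U. take L u = c}. F (drop L u))"
    using assms(1) by (simp add: sum.inter_filter)
  also have "\<dots> = sum F (drop L ` {u\<in>U. take L u = c})"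
  proof (rule sum.reindex[symmetric, unfolded comp_def])
    show "inj_on (drop L) {u \<in> U. take L u = c}"
      by (rule inj_onI) (metis (mono_tags, lifting) append_take_drop_id mem_Collect_eq)
  qed
  finally show ?thesis .
qed

lemma reach_sum_le1:
  assumes "\<forall>a\<in>set xs. stochastic (V a)" "finite U"
  shows "(\<Sum>p\<in>UNIV. \<Sum>u\<in>U. reach V f Qa Qr xs q p u) \<le> 1"
  using assms
proof (induction xs arbitrary: q U)
  case Nil
  have "(\<Sum>p\<in>UNIV. \<Sum>u\<in>U. reach V f Qa Qr [] q p u) = (\<Sum>p\<in>UNIV. if p = q then (\<Sum>u\<in>U. if u = [] then 1 else 0) else 0)"
    by (rule sum.cong) auto
  also have "\<dots> = (\<Sum>u\<in>U. if u = [] then 1 else 0)" by simp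
  also have "\<dots> \<le> 1" using Nil by (simp add: sum.delta')
  finally show ?case .
next
  case (Cons a xs)
  have st: "\<forall>q p. 0 \<le> V a q p" "\<And>q. (\<Sum>p\<in>UNIV. V a q p) = 1" using Cons.prems by (auto simp: stochastic_def)
  define I where "I p' p u = (if p' \<in> Qa then 0
         else if p' \<in> Qr then 0
         else if take (length (f a q)) u = f a q
              then reach V f Qa Qr xs p' p (drop (length (f a q)) u) else 0)" for p' p u
  have "(\<Sum>p\<in>UNIV. \<Sum>u\<in>U. reach V f Qa Qr (a#xs) q p u) = (\<Sum>p\<in>UNIV. \<Sum>u\<in>U. \<Sum>p'\<in>UNIV. V a q p' * I p' p u)"
    by (simp add: I_def)
  also have "\<dots> = (\<Sum>p\<in>UNIV. \<Sum>p'\<in>UNIV. \<Sum>u\<in>U. V a q p' * I p' p u)"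
    by (rule sum.cong[OF refl], rule sum.swap)
  also have "\<dots> = (\<Sum>p'\<in>UNIV. \<Sum>p\<in>UNIV. \<Sum>u\<in>U. V a q p' * I p' p u)"
    by (rule sum.swap)
  also have "\<dots> = (\<Sum>p'\<in>UNIV. V a q p' * (\<Sum>p\<in>UNIV. \<Sum>u\<in>U. I p' p u))"
    by (simp add: sum_distrib_left)
  also have "\<dots> \<le> (\<Sum>p\<in>UNIV. V a q p * 1)"
  proof (rule sum_mono, rule mult_left_mono)
    fix p'
    show "0 \<le> V a q p'" using st by auto
    show "(\<Sum>p\<in>UNIV. \<Sum>u\<in>U. I p' p u) \<le> 1"
    proof (cases "p' \<in> Qa \<or> p' \<in> Qr")
      case True then show ?thesis by (cases "p' \<in> Qa") (simp_all add: I_def)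
    next
      case False
      then have "(\<Sum>p\<in>UNIV. \<Sum>u\<in>U. I p' p u) = (\<Sum>p\<in>UNIV. \<Sum>u\<in>drop (length (f a q)) ` {u\<in>U. take (length (f a q)) u = f a q}. reach V f Qa Qr xs p' p u)"
        by (simp add: I_def sum_drop_eq[OF Cons.prems(2)])
      also have "\<dots> \<le> 1" using Cons.IH Cons.prems by simp
      finally show ?thesis .
    qed
  qed
  also have "\<dots> = 1" using st by simp
  finally show ?case .
qed

lemma prefix_sum:
  fixes \<Phi> :: "'b list \<Rightarrow> 'b list \<Rightarrow> real"
  shows "(\<Sum>i\<le>length w. if take (length c) (take i w) = c then \<Phi> (drop (length c) (take i w)) (drop i w) else 0)
    = (if take (length c) w = c then (\<Sum>i\<le>length w - length c. \<Phi> (take i (drop (length c) w)) (drop i (drop (length c) w))) else 0)"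
proof -
  let ?L = "length c"
  have small: "take ?L (take i w) \<noteq> c" if "i < ?L" for i
  proof
    assume "take ?L (take i w) = c"
    then have "length (take ?L (take i w)) = ?L" by simp
    then show False using that by simp
  qed
  show ?thesis
  proof (cases "take ?L w = c")
    case False
    have "take ?L (take i w) \<noteq> c" for i
      using small[of i] False by (cases "i < ?L") (auto simp: min_def)
    then show ?thesis using False by simp
  next
    case True
    then have Lw: "?L \<le> length w" by (metis length_take min.absorb_iff1 min.commute)
    have split: "{..length w} = {..<?L} \<union> {?L..length w}" using Lw by auto
    have "(\<Sum>i\<le>length w. if take ?L (take i w) = c then \<Phi> (drop ?L (take i w)) (drop i w) else 0)
        = (\<Sum>i\<in>{..<?L}. if take ?L (take i w) = c then \<Phi> (drop ?L (take i w)) (drop i w) else 0)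
          + (\<Sum>i\<in>{?L..length w}. if take ?L (take i w) = c then \<Phi> (drop ?L (take i w)) (drop i w) else 0)"
      unfolding split by (rule sum.union_disjoint) auto
    also have "(\<Sum>i\<in>{..<?L}. if take ?L (take i w) = c then \<Phi> (drop ?L (take i w)) (drop i w) else 0) = 0"
      using small by simp
    also have "{?L..length w} = {0 + ?L..(length w - ?L) + ?L}" using Lw by simp
    also have "(\<Sum>i\<in>{0 + ?L..(length w - ?L) + ?L}. if take ?L (take i w) = c then \<Phi> (drop ?L (take i w)) (drop i w) else 0)
       = (\<Sum>i\<in>{0..length w - ?L}. if take ?L (take (i + ?L) w) = c then \<Phi> (drop ?L (take (i + ?L) w)) (drop (i + ?L) w) else 0)"
      by (rule sum.shift_bounds_cl_nat_ivl)
    also have "\<dots> = (\<Sum>i\<in>{0..length w - ?L}. \<Phi> (take i (drop ?L w)) (drop i (drop ?L w)))"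
      using True by (intro sum.cong) (auto simp: drop_take add.commute)
    finally show ?thesis using True by (simp add: atLeast0AtMost)
  qed
qed

lemma acc_append:
  "acc V f Qa Qr (xs @ ys) q w = acc V f Qa Qr xs q w +
     (\<Sum>p\<in>UNIV. \<Sum>i\<le>length w. reach V f Qa Qr xs q p (take i w) * acc V f Qa Qr ys p (drop i w))"
proof (induction xs arbitrary: q w)
  case Nil
  have "(\<Sum>p\<in>UNIV. \<Sum>i\<le>length w. reach V f Qa Qr [] q p (take i w) * acc V f Qa Qr ys p (drop i w))
      = (\<Sum>p\<in>UNIV. if p = q then (\<Sum>i\<le>length w. if take i w = [] then acc V f Qa Qr ys q (drop i w) else 0) else 0)"
    by (rule sum.cong) (auto intro!: sum.cong)
  also have "\<dots> = (\<Sum>i\<le>length w. if take i w = [] then acc V f Qa Qr ys q (drop i w) else 0)" by simp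
  also have "\<dots> = (\<Sum>i\<le>length w. if i = 0 then acc V f Qa Qr ys q (drop i w) else 0)"
    by (intro sum.cong) auto
  also have "\<dots> = acc V f Qa Qr ys q w" by (simp add: sum.delta)
  finally show ?case by simp
next
  case (Cons a xs)
  define c where "c = f a q"
  define NH where "NH p' \<longleftrightarrow> p' \<notin> Qa \<and> p' \<notin> Qr" for p'
  define J2 where "J2 p' = (if NH p' \<and> take (length c) w = c then
      (\<Sum>p\<in>UNIV. \<Sum>i\<le>length (drop (length c) w). reach V f Qa Qr xs p' p (take i (drop (length c) w)) * acc V f Qa Qr ys p (drop i (drop (length c) w))) else 0)" for p'
  define K where "K p' p i = (if NH p' \<and> take (length c) (take i w) = c then reach V f Qa Qr xs p' p (drop (length c) (take i w)) else 0)" for p' p i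
  define J1 where "J1 p' = (if p' \<in> Qa then (if w = c then 1 else 0)
         else if p' \<in> Qr then 0
         else if take (length c) w = c
              then acc V f Qa Qr xs p' (drop (length c) w) else 0)" for p'
  have eq: "(if p' \<in> Qa then (if w = c then 1 else 0)
         else if p' \<in> Qr then 0
         else if take (length c) w = c
              then acc V f Qa Qr (xs @ ys) p' (drop (length c) w) else 0) = J1 p' + J2 p'" for p'
    unfolding J1_def J2_def NH_def Cons.IH by auto
  have "acc V f Qa Qr ((a # xs) @ ys) q w = (\<Sum>p'\<in>UNIV. V a q p' * (J1 p' + J2 p'))"
    unfolding append_Cons acc.simps(2) c_def[symmetric] eq ..
  also have "\<dots> = (\<Sum>p'\<in>UNIV. V a q p' * J1 p') + (\<Sum>p'\<in>UNIV. V a q p' * J2 p')"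
    by (simp add: algebra_simps sum.distrib)
  also have "(\<Sum>p'\<in>UNIV. V a q p' * J1 p') = acc V f Qa Qr (a # xs) q w"
    unfolding acc.simps(2) c_def J1_def ..
  also have "J2 p' = (\<Sum>p\<in>UNIV. \<Sum>i\<le>length w. K p' p i * acc V f Qa Qr ys p (drop i w))" for p'
  proof (cases "NH p'")
    case False then show ?thesis by (simp add: J2_def K_def)
  next
    case True
    have "(\<Sum>p\<in>UNIV. \<Sum>i\<le>length w. K p' p i * acc V f Qa Qr ys p (drop i w))
        = (\<Sum>p\<in>UNIV. \<Sum>i\<le>length w. if take (length c) (take i w) = c then reach V f Qa Qr xs p' p (drop (length c) (take i w)) * acc V f Qa Qr ys p (drop i w) else 0)"
      using True by (auto simp: K_def intro!: sum.cong)
    also have "\<dots> = (\<Sum>p\<in>UNIV. if take (length c) w = c then (\<Sum>i\<le>length w - length c. reach V f Qa Qr xs p' p (take i (drop (length c) w)) * acc V f Qa Qr ys p (drop i (drop (length c) w))) else 0)"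
      by (rule sum.cong[OF refl], rule prefix_sum)
    finally show ?thesis using True by (simp add: J2_def)
  qed
  then have "(\<Sum>p'\<in>UNIV. V a q p' * J2 p') = (\<Sum>p'\<in>UNIV. \<Sum>p\<in>UNIV. \<Sum>i\<le>length w. V a q p' * K p' p i * acc V f Qa Qr ys p (drop i w))"
    by (simp add: sum_distrib_left mult.assoc)
  also have "\<dots> = (\<Sum>p\<in>UNIV. \<Sum>p'\<in>UNIV. \<Sum>i\<le>length w. V a q p' * K p' p i * acc V f Qa Qr ys p (drop i w))"
    by (rule sum.swap)
  also have "\<dots> = (\<Sum>p\<in>UNIV. \<Sum>i\<le>length w. \<Sum>p'\<in>UNIV. V a q p' * K p' p i * acc V f Qa Qr ys p (drop i w))"
    by (rule sum.cong[OF refl], rule sum.swap)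
  also have "\<dots> = (\<Sum>p\<in>UNIV. \<Sum>i\<le>length w. reach V f Qa Qr (a # xs) q p (take i w) * acc V f Qa Qr ys p (drop i w))"
    by (intro sum.cong refl) (auto simp: K_def NH_def c_def sum_distrib_right intro!: sum.cong)
  finally show ?case by simp
qed


lemma subseq_lim:
  fixes x :: "nat \<Rightarrow> 'i::countable \<Rightarrow> real"
  assumes "\<forall>n i. 0 \<le> x n i \<and> x n i \<le> 1"
  obtains r l where "strict_mono r" "\<And>i. (\<lambda>n. x (r n) i) \<longlonglongrightarrow> l i"
proof -
  define S :: "('i \<Rightarrow> real) set" where "S = PiE UNIV (\<lambda>_. {0..1})"
  have "compactin (product_topology (\<lambda>_. euclidean) UNIV) S"
    unfolding S_def by (subst compactin_PiE) auto
  then have "compact S" by (simp add: euclidean_product_topology)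
  then have "seq_compact S" by (rule compact_imp_seq_compact)
  moreover have "\<forall>n. x n \<in> S" using assms by (auto simp: S_def)
  ultimately obtain l r where "l \<in> S" "strict_mono r" "(x \<circ> r) \<longlonglongrightarrow> l"
    unfolding seq_compact_def by metis
  moreover have "(\<lambda>n. x (r n) i) \<longlonglongrightarrow> l i" for i
  proof -
    have "isCont (\<lambda>f. f i) l"
      using continuous_on_eq_continuous_at[OF open_UNIV, of "\<lambda>f::'i \<Rightarrow> real. f i"] by simp
    from isCont_tendsto_compose[OF this \<open>(x \<circ> r) \<longlonglongrightarrow> l\<close>] show ?thesis by (simp add: comp_def)
  qed
  ultimately show ?thesis using that by blast
qed

lemma tb1:
  fixes a b c d \<eta> :: real
  assumes "\<bar>a - b\<bar> \<le> \<eta>" "0 \<le> c" "c \<le> 1" "0 \<le> d" "d \<le> 1"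
  shows "(a - b) * (c - d) \<le> \<eta>"
proof -
  have "(a - b) * (c - d) \<le> \<bar>a - b\<bar> * \<bar>c - d\<bar>" by (simp add: abs_mult[symmetric])
  also have "\<dots> \<le> \<eta> * 1" using assms by (intro mult_mono) auto
  finally show ?thesis by simp
qed

lemma tb2:
  fixes a b c d \<eta> :: real
  assumes "\<bar>c - d\<bar> \<le> \<eta>" "0 \<le> a" "0 \<le> b"
  shows "(a - b) * (c - d) \<le> (a + b) * \<eta>"
proof -
  have "(a - b) * (c - d) \<le> \<bar>a - b\<bar> * \<bar>c - d\<bar>" by (simp add: abs_mult[symmetric])
  also have "\<dots> \<le> (a + b) * \<eta>" using assms by (intro mult_mono) auto
  finally show ?thesis by simp
qed

lemma tb3:
  fixes a b c d e :: real
  assumes "c \<le> e" "0 \<le> a" "0 \<le> b" "0 \<le> c" "0 \<le> d" "d \<le> 1"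
  shows "(a - b) * (c - d) \<le> a * e + b"
proof -
  have "a * c \<le> a * e" using assms by (intro mult_left_mono) auto
  moreover have "b * d \<le> b" using assms by (simp add: mult_left_le)
  moreover have "0 \<le> a * d" "0 \<le> b * c" using assms by auto
  ultimately show ?thesis by (simp add: algebra_simps)
qed

lemma core:
  fixes g :: "nat \<Rightarrow> 'q::finite \<Rightarrow> 'q \<Rightarrow> nat \<Rightarrow> real" and h :: "nat \<Rightarrow> 'q \<Rightarrow> nat \<Rightarrow> real"
    and pi :: "nat \<Rightarrow> 'q \<Rightarrow> nat \<Rightarrow> real"
  assumes g0: "\<And>n p p' j. 0 \<le> g n p p' j"
    and gs: "\<And>n p J. (\<Sum>p'\<in>UNIV. \<Sum>j\<le>J. g n p p' j) \<le> 1"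
    and h0: "\<And>k p j. 0 \<le> h k p j"
    and hs: "\<And>k p J. (\<Sum>j\<le>J. h k p j) \<le> 1"
    and pi0: "\<And>m p i. 0 \<le> pi m p i"
    and pis: "\<And>m. (\<Sum>p\<in>UNIV. \<Sum>i\<le>m. pi m p i) \<le> 1"
    and eps: "0 < \<epsilon>"
    and key: "\<And>m N. N \<noteq> m \<Longrightarrow> 4 * \<epsilon> \<le> (\<Sum>p\<in>UNIV. \<Sum>i\<le>m. pi m p i *
        (\<Sum>p'\<in>UNIV. \<Sum>j\<le>m - i. (g m p p' j - g N p p' j) * (h N p' (m - i - j) - h m p' (m - i - j))))"
  shows False
proof -
  have g1: "g n p p' j \<le> 1" for n p p' j
  proof -
    have "g n p p' j \<le> (\<Sum>j'\<le>j. g n p p' j')" by (rule member_le_sum) (auto intro: g0)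
    also have "\<dots> \<le> (\<Sum>p''\<in>UNIV. \<Sum>j'\<le>j. g n p p'' j')"
      by (rule member_le_sum[of p' UNIV "\<lambda>p''. \<Sum>j'\<le>j. g n p p'' j'"]) (auto intro!: sum_nonneg g0)
    also have "\<dots> \<le> 1" by (rule gs)
    finally show ?thesis .
  qed
  have h1: "h k p j \<le> 1" for k p j
  proof -
    have "h k p j \<le> (\<Sum>j'\<le>j. h k p j')" by (rule member_le_sum) (auto intro: h0)
    also have "\<dots> \<le> 1" by (rule hs)
    finally show ?thesis .
  qed
  define x :: "nat \<Rightarrow> ('q \<times> 'q \<times> nat) + ('q \<times> nat) \<Rightarrow> real" where
    "x n idx = (case idx of Inl t \<Rightarrow> g n (fst t) (fst (snd t)) (snd (snd t)) | Inr t \<Rightarrow> h n (fst t) (snd t))" for n idx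
  have xb: "\<And>n i. 0 \<le> x n i \<and> x n i \<le> 1"
  proof -
    fix n i show "0 \<le> x n i \<and> x n i \<le> 1"
    proof (cases i)
      case (Inl t) then show ?thesis using g0 g1 by (simp add: x_def)
    next
      case (Inr t) then show ?thesis using h0 h1 by (simp add: x_def)
    qed
  qed
  obtain r l where r: "strict_mono r" and l: "\<And>i. (\<lambda>n. x (r n) i) \<longlonglongrightarrow> l i"
    using subseq_lim[of x] xb by blast
  define G where "G p p' j = l (Inl (p, p', j))" for p p' j
  define H where "H p j = l (Inr (p, j))" for p j
  have gl: "(\<lambda>n. g (r n) p p' j) \<longlonglongrightarrow> G p p' j" for p p' j
    using l[of "Inl (p, p', j)"] by (simp add: x_def G_def)
  have hl: "(\<lambda>n. h (r n) p j) \<longlonglongrightarrow> H p j" for p j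
    using l[of "Inr (p, j)"] by (simp add: x_def H_def)
  have G0: "0 \<le> G p p' j" for p p' j
    by (rule LIMSEQ_le_const[OF gl]) (simp add: g0)
  have H0: "0 \<le> H p j" for p j
    by (rule LIMSEQ_le_const[OF hl]) (simp add: h0)
  have H1: "H p j \<le> 1" for p j
    by (rule LIMSEQ_le_const2[OF hl]) (simp add: h1)
  have Gs: "(\<Sum>p'\<in>UNIV. \<Sum>j\<le>J. G p p' j) \<le> 1" for p J
  proof -
    have "(\<lambda>n. \<Sum>p'\<in>UNIV. \<Sum>j\<le>J. g (r n) p p' j) \<longlonglongrightarrow> (\<Sum>p'\<in>UNIV. \<Sum>j\<le>J. G p p' j)"
      by (intro tendsto_sum gl)
    then show ?thesis by (rule LIMSEQ_le_const2) (use gs in auto)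
  qed
  have Hs: "(\<Sum>j\<le>J. H p j) \<le> 1" for p J
  proof -
    have "(\<lambda>n. \<Sum>j\<le>J. h (r n) p j) \<longlonglongrightarrow> (\<Sum>j\<le>J. H p j)"
      by (intro tendsto_sum hl)
    then show ?thesis by (rule LIMSEQ_le_const2) (use hs in auto)
  qed
  define Estar where "Estar m = (\<Sum>p\<in>UNIV. \<Sum>i\<le>m. pi m p i *
        (\<Sum>p'\<in>UNIV. \<Sum>j\<le>m - i. (g m p p' j - G p p' j) * (H p' (m - i - j) - h m p' (m - i - j))))" for m
  have lower: "4 * \<epsilon> \<le> Estar m" for m
  proof -
    have "(\<lambda>n. (\<Sum>p\<in>UNIV. \<Sum>i\<le>m. pi m p i *
        (\<Sum>p'\<in>UNIV. \<Sum>j\<le>m - i. (g m p p' j - g (r n) p p' j) * (h (r n) p' (m - i - j) - h m p' (m - i - j)))))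
        \<longlonglongrightarrow> Estar m"
      unfolding Estar_def by (intro tendsto_intros gl hl)
    moreover have "\<forall>n\<ge>Suc m. 4 * \<epsilon> \<le> (\<Sum>p\<in>UNIV. \<Sum>i\<le>m. pi m p i *
        (\<Sum>p'\<in>UNIV. \<Sum>j\<le>m - i. (g m p p' j - g (r n) p p' j) * (h (r n) p' (m - i - j) - h m p' (m - i - j))))"
    proof (intro allI impI key)
      fix n assume "Suc m \<le> n"
      moreover have "n \<le> r n" using r by (rule seq_suble)
      ultimately show "r n \<noteq> m" by simp
    qed
    ultimately show ?thesis by (intro LIMSEQ_le_const) auto
  qed
  define sG where "sG p j = (\<Sum>p'\<in>UNIV. G p p' j)" for p j
  have sG0: "0 \<le> sG p j" for p j unfolding sG_def by (intro sum_nonneg G0)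
  have sumG: "summable (sG p)" for p
  proof (rule summableI_nonneg_bounded[where x=1])
    show "0 \<le> sG p n" for n by (rule sG0)
    show "sum (sG p) {..<n} \<le> 1" for n
    proof -
      have "sum (sG p) {..<n} \<le> sum (sG p) {..n}" by (rule sum_mono2) (auto intro: sG0)
      also have "\<dots> = (\<Sum>p'\<in>UNIV. \<Sum>j\<le>n. G p p' j)" unfolding sG_def by (rule sum.swap)
      also have "\<dots> \<le> 1" by (rule Gs)
      finally show ?thesis .
    qed
  qed
  have sumH: "summable (H p)" for p
  proof (rule summableI_nonneg_bounded[where x=1])
    show "0 \<le> H p n" for n by (rule H0)
    show "sum (H p) {..<n} \<le> 1" for n
    proof -
      have "sum (H p) {..<n} \<le> sum (H p) {..n}" by (rule sum_mono2) (auto intro: H0)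
      also have "\<dots> \<le> 1" by (rule Hs)
      finally show ?thesis .
    qed
  qed
  have "\<exists>N. \<forall>m\<ge>N. \<forall>n. norm (sum (sG p) {m..<n}) < \<epsilon>" for p
    using sumG[of p] eps unfolding summable_Cauchy by blast
  then obtain Nf where Nf: "\<And>p m n. m \<ge> Nf p \<Longrightarrow> norm (sum (sG p) {m..<n}) < \<epsilon>" by metis
  have "\<exists>N. \<forall>j\<ge>N. norm (H p j - 0) < \<epsilon>" for p
    using summable_LIMSEQ_zero[OF sumH[of p]] eps unfolding LIMSEQ_iff by blast
  then obtain Nh where Nh: "\<And>p j. j \<ge> Nh p \<Longrightarrow> H p j < \<epsilon>" by (metis abs_less_iff diff_zero real_norm_def)
  define B where "B = (\<Sum>p\<in>UNIV. Nf p) + (\<Sum>p\<in>UNIV. Nh p)"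
  have BNf: "Nf p \<le> B" for p
  proof -
    have "Nf p \<le> (\<Sum>p\<in>UNIV. Nf p)" by (rule member_le_sum) auto
    then show ?thesis unfolding B_def by simp
  qed
  have BNh: "Nh p \<le> B" for p
  proof -
    have "Nh p \<le> (\<Sum>p\<in>UNIV. Nh p)" by (rule member_le_sum) auto
    then show ?thesis unfolding B_def by simp
  qed
  define C where "C = real CARD('q) * (real B + 1) + 2"
  have C0: "0 < C" unfolding C_def by (simp add: add_pos_nonneg)
  define \<eta> where "\<eta> = \<epsilon> / C"
  have eta0: "0 < \<eta>" unfolding \<eta>_def using eps C0 by simp
  have etaC: "\<eta> * C = \<epsilon>" unfolding \<eta>_def using C0 by simp
  have ev1: "\<forall>\<^sub>F n in sequentially. \<forall>p p'. \<forall>j\<in>{..B}. dist (g (r n) p p' j) (G p p' j) < \<eta>"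
    by (intro eventually_all_finite eventually_ball_finite finite_atMost ballI tendstoD[OF gl] eta0)
  have ev2: "\<forall>\<^sub>F n in sequentially. \<forall>p'. \<forall>j\<in>{..B}. dist (h (r n) p' j) (H p' j) < \<eta>"
    by (intro eventually_all_finite eventually_ball_finite finite_atMost ballI tendstoD[OF hl] eta0)
  obtain n0 where n0: "\<And>p p' j. j \<le> B \<Longrightarrow> \<bar>g (r n0) p p' j - G p p' j\<bar> \<le> \<eta>"
     "\<And>p' j. j \<le> B \<Longrightarrow> \<bar>h (r n0) p' j - H p' j\<bar> \<le> \<eta>"
  proof -
    from eventually_conj[OF ev1 ev2] obtain n0 where
      "\<forall>p p'. \<forall>j\<in>{..B}. dist (g (r n0) p p' j) (G p p' j) < \<eta>"
      "\<forall>p'. \<forall>j\<in>{..B}. dist (h (r n0) p' j) (H p' j) < \<eta>"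
      unfolding eventually_sequentially by blast
    note A = this
    show ?thesis
    proof (rule that)
      fix p p' j assume "j \<le> B"
      then have "dist (g (r n0) p p' j) (G p p' j) < \<eta>" using A(1) by auto
      then show "\<bar>g (r n0) p p' j - G p p' j\<bar> \<le> \<eta>" by (simp add: dist_real_def)
    next
      fix p' j assume "j \<le> B"
      then have "dist (h (r n0) p' j) (H p' j) < \<eta>" using A(2) by auto
      then show "\<bar>h (r n0) p' j - H p' j\<bar> \<le> \<eta>" by (simp add: dist_real_def)
    qed
  qed
  define m where "m = r n0"
  have inner: "(\<Sum>p'\<in>UNIV. \<Sum>j\<le>R. (g m p p' j - G p p' j) * (H p' (R - j) - h m p' (R - j))) \<le> 3 * \<epsilon>" for p R
  proof -
    define u where "u p' j = (if j \<le> B then \<eta> else 0) + \<eta> * (g m p p' j + G p p' j) + \<epsilon> * g m p p' j + (if B < j then G p p' j else 0)" for p' j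
    have tu: "(g m p p' j - G p p' j) * (H p' (R - j) - h m p' (R - j)) \<le> u p' j" if "j \<le> R" for p' j
    proof -
      have nn: "0 \<le> \<eta> * (g m p p' j + G p p' j)" "0 \<le> \<epsilon> * g m p p' j"
        using eta0 eps g0 G0 by (auto intro!: mult_nonneg_nonneg add_nonneg_nonneg)
      show ?thesis
      proof (cases "j \<le> B")
        case True
        have "(g m p p' j - G p p' j) * (H p' (R - j) - h m p' (R - j)) \<le> \<eta>"
          by (rule tb1) (use n0(1)[OF True] H0 H1 h0 h1 in \<open>auto simp: m_def\<close>)
        then show ?thesis using nn True G0 unfolding u_def by auto
      next
        case False
        show ?thesis
        proof (cases "R - j \<le> B")
          case True
          have "(g m p p' j - G p p' j) * (H p' (R - j) - h m p' (R - j)) \<le> (g m p p' j + G p p' j) * \<eta>"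
            by (rule tb2) (use n0(2)[OF True] g0 G0 in \<open>auto simp: m_def abs_minus_commute\<close>)
          moreover have "\<eta> * (g m p p' j + G p p' j) \<le> u p' j"
            unfolding u_def using nn False G0[of p p' j] by simp
          ultimately show ?thesis by (simp add: mult.commute)
        next
          case F2: False
          have "Nh p' \<le> R - j" using BNh[of p'] F2 by simp
          then have "H p' (R - j) < \<epsilon>" by (rule Nh)
          then have "(g m p p' j - G p p' j) * (H p' (R - j) - h m p' (R - j)) \<le> g m p p' j * \<epsilon> + G p p' j"
            by (intro tb3) (use g0 G0 H0 h0 h1 in auto)
          moreover have "g m p p' j * \<epsilon> + G p p' j \<le> u p' j"
            unfolding u_def using nn False G0[of p p' j] by (simp add: mult.commute)
          ultimately show ?thesis by linarith
        qed
      qed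
    qed
    have "(\<Sum>p'\<in>UNIV. \<Sum>j\<le>R. (g m p p' j - G p p' j) * (H p' (R - j) - h m p' (R - j)))
        \<le> (\<Sum>p'\<in>UNIV. \<Sum>j\<le>R. u p' j)"
      by (intro sum_mono tu) auto
    also have "\<dots> = (\<Sum>p'\<in>(UNIV::'q set). \<Sum>j\<le>R. (if j \<le> B then \<eta> else 0))
        + \<eta> * ((\<Sum>p'\<in>UNIV. \<Sum>j\<le>R. g m p p' j) + (\<Sum>p'\<in>UNIV. \<Sum>j\<le>R. G p p' j))
        + \<epsilon> * (\<Sum>p'\<in>UNIV. \<Sum>j\<le>R. g m p p' j)
        + (\<Sum>p'\<in>UNIV. \<Sum>j\<le>R. (if B < j then G p p' j else 0))"
      unfolding u_def by (simp add: sum.distrib sum_distrib_left algebra_simps)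
    also have "(\<Sum>p'\<in>UNIV. \<Sum>j\<le>R. (if B < j then G p p' j else 0)) = sum (sG p) {Suc B..<Suc R}"
    proof -
      have "(\<Sum>p'\<in>UNIV. \<Sum>j\<le>R. (if B < j then G p p' j else 0)) = (\<Sum>j\<le>R. \<Sum>p'\<in>UNIV. (if B < j then G p p' j else 0))"
        by (rule sum.swap)
      also have "\<dots> = (\<Sum>j\<le>R. if B < j then sG p j else 0)"
        unfolding sG_def by (intro sum.cong) auto
      also have "\<dots> = sum (sG p) ({..R} \<inter> {j. B < j})"
        by (simp add: sum.inter_restrict)
      also have "{..R} \<inter> {j. B < j} = {Suc B..<Suc R}" by auto
      finally show ?thesis .
    qed
    also have "sum (sG p) {Suc B..<Suc R} \<le> \<epsilon>"
      using Nf[of p "Suc B" "Suc R"] BNf[of p] by simp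
    also have "(\<Sum>p'\<in>(UNIV::'q set). \<Sum>j\<le>R. (if j \<le> B then \<eta> else 0)) \<le> real CARD('q) * ((real B + 1) * \<eta>)"
    proof -
      have "(\<Sum>j\<le>R. (if j \<le> B then \<eta> else 0)) \<le> (real B + 1) * \<eta>" 
      proof -
        have "(\<Sum>j\<le>R. (if j \<le> B then \<eta> else 0)) = sum (\<lambda>_. \<eta>) ({..R} \<inter> {..B})"
          unfolding sum.inter_restrict[OF finite_atMost] by simp
        also have "\<dots> \<le> sum (\<lambda>_. \<eta>) {..B}" by (rule sum_mono2) (use eta0 in auto)
        also have "\<dots> = (real B + 1) * \<eta>" by simp
        finally show ?thesis .
      qed
      then have "(\<Sum>p'\<in>(UNIV::'q set). \<Sum>j\<le>R. (if j \<le> B then \<eta> else 0)) \<le> (\<Sum>p'\<in>(UNIV::'q set). (real B + 1) * \<eta>)"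
        by (intro sum_mono) auto
      then show ?thesis by simp
    qed
    finally have "(\<Sum>p'\<in>UNIV. \<Sum>j\<le>R. (g m p p' j - G p p' j) * (H p' (R - j) - h m p' (R - j)))
        \<le> real CARD('q) * ((real B + 1) * \<eta>) + \<eta> * ((\<Sum>p'\<in>UNIV. \<Sum>j\<le>R. g m p p' j) + (\<Sum>p'\<in>UNIV. \<Sum>j\<le>R. G p p' j))
        + \<epsilon> * (\<Sum>p'\<in>UNIV. \<Sum>j\<le>R. g m p p' j) + \<epsilon>" by simp
    also have "\<dots> \<le> real CARD('q) * ((real B + 1) * \<eta>) + \<eta> * (1 + 1) + \<epsilon> * 1 + \<epsilon>"
      using gs[of m p R] Gs[of p R] eta0 eps
      by (intro add_mono mult_left_mono order_refl) auto
    also have "\<dots> = \<eta> * C + 2 * \<epsilon>" unfolding C_def by (simp add: algebra_simps)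
    also have "\<dots> = 3 * \<epsilon>" using etaC by simp
    finally show ?thesis .
  qed
  have "Estar m \<le> (\<Sum>p\<in>UNIV. \<Sum>i\<le>m. pi m p i * (3 * \<epsilon>))"
    unfolding Estar_def by (intro sum_mono mult_left_mono inner pi0)
  also have "\<dots> = 3 * \<epsilon> * (\<Sum>p\<in>UNIV. \<Sum>i\<le>m. pi m p i)"
    by (simp add: sum_distrib_left sum_distrib_right algebra_simps)
  also have "\<dots> \<le> 3 * \<epsilon> * 1" using pis[of m] eps by (intro mult_left_mono) auto
  finally have "Estar m \<le> 3 * \<epsilon>" by simp
  with lower[of m] eps show False by simp
qed

lemma comb4: "sum a A + sum b A - sum c A - sum d A = (\<Sum>x\<in>A. a x + b x - c x - d x)" for a b c d :: "_ \<Rightarrow> real"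
  by (simp add: sum.distrib sum_subtractf)

lemma comb_prod: "(\<Sum>x\<in>A. \<Sum>y\<in>B x. (a x y - b x y) * (c x y - d x y)) = (\<Sum>x\<in>A. \<Sum>y\<in>B x. a x y * c x y) + (\<Sum>x\<in>A. \<Sum>y\<in>B x. b x y * d x y) - (\<Sum>x\<in>A. \<Sum>y\<in>B x. b x y * c x y) - (\<Sum>x\<in>A. \<Sum>y\<in>B x. a x y * d x y)"
  for a b c d :: "_ \<Rightarrow> _ \<Rightarrow> real"
  unfolding comb4 by (intro sum.cong refl) (simp add: algebra_simps)

lemma R3_hi: "n \<noteq> k \<Longrightarrow> m = k \<or> m = n \<Longrightarrow> R3 (replicate m 0 @ replicate n 1 @ replicate k 2) (replicate m 3)"
  unfolding R3_def by blast

lemma R3_lo: "\<not> R3 (replicate m 0 @ replicate n 1 @ replicate n 2) w"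
proof
  assume "R3 (replicate m 0 @ replicate n 1 @ replicate n 2) w"
  then obtain m' n' k' where e: "replicate m 0 @ replicate n 1 @ replicate n 2 = replicate m' 0 @ replicate n' 1 @ replicate k' (2::nat)"
    and "n' \<noteq> k'" unfolding R3_def by blast
  have "length (filter (\<lambda>x. x = 1) (replicate m 0 @ replicate n 1 @ replicate n (2::nat))) = length (filter (\<lambda>x. x = 1) (replicate m' 0 @ replicate n' 1 @ replicate k' (2::nat)))"
    using e by simp
  then have "n = n'" by (simp add: filter_replicate)
  have "length (filter (\<lambda>x. x = 2) (replicate m 0 @ replicate n 1 @ replicate n (2::nat))) = length (filter (\<lambda>x. x = 2) (replicate m' 0 @ replicate n' 1 @ replicate k' (2::nat)))"
    using e by simp
  then have "n = k'" by (simp add: filter_replicate)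
  with \<open>n = n'\<close> \<open>n' \<noteq> k'\<close> show False by simp
qed

lemma sum_rep_le1:
  fixes F :: "nat list \<Rightarrow> real"
  assumes "\<And>U. finite U \<Longrightarrow> sum F U \<le> 1"
  shows "(\<Sum>j\<le>J. F (replicate j 3)) \<le> 1"
proof -
  have "(\<Sum>j\<le>J. F (replicate j 3)) = sum F ((\<lambda>j. replicate j 3) ` {..J})"
    by (rule sum.reindex[symmetric, unfolded comp_def]) (auto simp: inj_on_def)
  also have "\<dots> \<le> 1" by (rule assms) simp
  finally show ?thesis .
qed

lemma sum_rep_le1':
  fixes F :: "'q::finite \<Rightarrow> nat list \<Rightarrow> real"
  assumes "\<And>U. finite U \<Longrightarrow> (\<Sum>p\<in>UNIV. sum (F p) U) \<le> 1"
  shows "(\<Sum>p\<in>UNIV. \<Sum>j\<le>J. F p (replicate j 3)) \<le> 1"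
proof -
  have "(\<Sum>j\<le>J. F p (replicate j 3)) = sum (F p) ((\<lambda>j. replicate j 3) ` {..J})" for p
    by (rule sum.reindex[symmetric, unfolded comp_def]) (auto simp: inj_on_def)
  then have "(\<Sum>p\<in>UNIV. \<Sum>j\<le>J. F p (replicate j 3)) = (\<Sum>p\<in>UNIV. sum (F p) ((\<lambda>j. replicate j 3) ` {..J}))"
    by simp
  also have "\<dots> \<le> 1" by (rule assms) simp
  finally show ?thesis .
qed

theorem theorem8:
  fixes V :: "nat sym \<Rightarrow> 'q::finite \<Rightarrow> 'q \<Rightarrow> real"
    and f :: "nat sym \<Rightarrow> 'q \<Rightarrow> nat list"
    and q0 :: 'q and Qa Qr :: "'q set"
  assumes "pfst {0,1,2} {3} V f q0 Qa Qr"
  shows "(\<forall>\<alpha>::real. \<alpha> > 1/2 \<longrightarrow> \<not> computes_with_prob {0,1,2} {3} V f q0 Qa Qr R3 \<alpha>)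
         \<and> \<not> computes_isolated {0,1,2} {3} V f q0 Qa Qr R3"
proof -
  have stoch: "stochastic (V a)" if "a \<in> Sym ` {0,1,2} \<union> {LEnd, REnd}" for a
    using assms that unfolding pfst_def by blast
  have iso: "\<not> computes_isolated {0,1,2} {3} V f q0 Qa Qr R3"
  proof
    assume "computes_isolated {0,1,2} {3} V f q0 Qa Qr R3"
    then obtain \<alpha> \<epsilon> where a0: "0 < \<alpha>" "\<alpha> < 1" "0 < \<epsilon>" and
      CC: "\<forall>v \<in> lists {0,1,2}. \<forall>w \<in> lists {3}.
          (R3 v w \<longrightarrow> Tprob V f q0 Qa Qr w v \<ge> \<alpha> + \<epsilon>) \<and>
          (\<not> R3 v w \<longrightarrow> Tprob V f q0 Qa Qr w v \<le> \<alpha> - \<epsilon>)"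
      unfolding computes_isolated_def by blast
    have hi: "\<alpha> + \<epsilon> \<le> Tprob V f q0 Qa Qr (replicate m 3) (replicate m 0 @ replicate n 1 @ replicate k 2)"
      if "n \<noteq> k" "m = k \<or> m = n" for m n k
    proof -
      have "replicate m 0 @ replicate n 1 @ replicate k 2 \<in> lists {0,1,2::nat}" "replicate m (3::nat) \<in> lists {3}" by auto
      from CC[rule_format, OF this] R3_hi[OF that] show ?thesis by blast
    qed
    have lo: "Tprob V f q0 Qa Qr (replicate m 3) (replicate m 0 @ replicate n 1 @ replicate n 2) \<le> \<alpha> - \<epsilon>" for m n
    proof -
      have "replicate m 0 @ replicate n 1 @ replicate n 2 \<in> lists {0,1,2::nat}" "replicate m (3::nat) \<in> lists {3}" by auto
      from CC[rule_format, OF this] R3_lo show ?thesis by blast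
    qed
    show False
    proof (cases "q0 \<in> Qa")
      case True
      from lo[of 0 0] True a0 show False by (simp add: Tprob_def)
    next
      case F1: False
      show False
      proof (cases "q0 \<in> Qr")
        case True
        from hi[of 1 0 0] True F1 a0 show False by (simp add: Tprob_def)
      next
        case F2: False
        define g where "g n p p' j = reach V f Qa Qr (map Sym (replicate n (1::nat))) p p' (replicate j (3::nat))" for n p p' j
        define h where "h k p j = acc V f Qa Qr (map Sym (replicate k (2::nat)) @ [REnd]) p (replicate j (3::nat))" for k p j
        define pi where "pi m p i = reach V f Qa Qr (LEnd # map Sym (replicate m (0::nat))) q0 p (replicate i (3::nat))" for m p i
        define a1 where "a1 n p j = acc V f Qa Qr (map Sym (replicate n (1::nat))) p (replicate j (3::nat))" for n p j
        define a0' where "a0' m = acc V f Qa Qr (LEnd # map Sym (replicate m (0::nat))) q0 (replicate m (3::nat))" for m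
        define F where "F m n k = Tprob V f q0 Qa Qr (replicate m 3) (replicate m 0 @ replicate n 1 @ replicate k 2)" for m n k
        have dec: "F m n k = a0' m + (\<Sum>p\<in>UNIV. \<Sum>i\<le>m. pi m p i * (a1 n p (m - i) +
            (\<Sum>p'\<in>UNIV. \<Sum>j\<le>m - i. g n p p' j * h k p' (m - i - j))))" for m n k
        proof -
          have tape: "LEnd # map Sym (replicate m 0 @ replicate n 1 @ replicate k 2) @ [REnd]
              = (LEnd # map Sym (replicate m (0::nat))) @ (map Sym (replicate n 1) @ (map Sym (replicate k 2) @ [REnd]))"
            by simp
          have inner: "acc V f Qa Qr (map Sym (replicate n 1) @ (map Sym (replicate k 2) @ [REnd])) p (replicate (m - i) 3)
              = a1 n p (m - i) + (\<Sum>p'\<in>UNIV. \<Sum>j\<le>m - i. g n p p' j * h k p' (m - i - j))" for p i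
            unfolding acc_append[of _ _ _ _ "map Sym (replicate n 1)"] a1_def g_def h_def length_replicate
            by (intro arg_cong2[where f="(+)"] refl sum.cong) (auto simp: take_replicate drop_replicate min_def)
          let ?X = "LEnd # map Sym (replicate m (0::nat))"
          let ?YZ = "map Sym (replicate n (1::nat)) @ (map Sym (replicate k (2::nat)) @ [REnd])"
          let ?w = "replicate m (3::nat)"
          have "F m n k = acc V f Qa Qr (?X @ ?YZ) q0 ?w"
            unfolding F_def Tprob_def using F1 F2 by (simp only: if_False tape)
          also have "\<dots> = acc V f Qa Qr ?X q0 ?w + (\<Sum>p\<in>UNIV. \<Sum>i\<le>length ?w. reach V f Qa Qr ?X q0 p (take i ?w) * acc V f Qa Qr ?YZ p (drop i ?w))"
            by (rule acc_append)
          also have "\<dots> = a0' m + (\<Sum>p\<in>UNIV. \<Sum>i\<le>m. pi m p i * acc V f Qa Qr ?YZ p (replicate (m - i) 3))"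
            unfolding a0'_def pi_def length_replicate
            by (intro arg_cong2[where f="(+)"] refl sum.cong) (auto simp: take_replicate drop_replicate min_def)
          also have "\<dots> = a0' m + (\<Sum>p\<in>UNIV. \<Sum>i\<le>m. pi m p i * (a1 n p (m - i) +
            (\<Sum>p'\<in>UNIV. \<Sum>j\<le>m - i. g n p p' j * h k p' (m - i - j))))"
            unfolding inner ..
          finally show ?thesis .
        qed
        show False
        proof (rule core[of g h pi \<epsilon>])
          show "0 \<le> g n p p' j" for n p p' j unfolding g_def
            by (rule reach_nonneg) (auto intro: stoch)
          show "(\<Sum>p'\<in>UNIV. \<Sum>j\<le>J. g n p p' j) \<le> 1" for n p J unfolding g_def
            by (rule sum_rep_le1'[of "reach V f Qa Qr (map Sym (replicate n 1)) p"], rule reach_sum_le1)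
               (auto intro: stoch)
          show "0 \<le> h k p j" for k p j unfolding h_def
            by (rule acc_nonneg) (auto intro: stoch)
          show "(\<Sum>j\<le>J. h k p j) \<le> 1" for k p J unfolding h_def
            by (rule sum_rep_le1, rule acc_sum_le1) (auto intro: stoch)
          show "0 \<le> pi m p i" for m p i unfolding pi_def
            by (rule reach_nonneg) (auto intro: stoch)
          show "(\<Sum>p\<in>UNIV. \<Sum>i\<le>m. pi m p i) \<le> 1" for m unfolding pi_def
            by (rule sum_rep_le1'[of "reach V f Qa Qr (LEnd # map Sym (replicate m 0)) q0"], rule reach_sum_le1)
               (auto intro: stoch)
          show "0 < \<epsilon>" by (rule a0)
          show "4 * \<epsilon> \<le> (\<Sum>p\<in>UNIV. \<Sum>i\<le>m. pi m p i *
            (\<Sum>p'\<in>UNIV. \<Sum>j\<le>m - i. (g m p p' j - g N p p' j) * (h N p' (m - i - j) - h m p' (m - i - j))))"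
            if "N \<noteq> m" for m N
          proof -
            have "\<alpha> + \<epsilon> \<le> F m m N" unfolding F_def by (rule hi) (use that in auto)
            moreover have "\<alpha> + \<epsilon> \<le> F m N m" unfolding F_def by (rule hi) (use that in auto)
            moreover have "F m N N \<le> \<alpha> - \<epsilon>" unfolding F_def by (rule lo)
            moreover have "F m m m \<le> \<alpha> - \<epsilon>" unfolding F_def by (rule lo)
            moreover have "F m m N + F m N m - F m N N - F m m m = (\<Sum>p\<in>UNIV. \<Sum>i\<le>m. pi m p i *
              (\<Sum>p'\<in>UNIV. \<Sum>j\<le>m - i. (g m p p' j - g N p p' j) * (h N p' (m - i - j) - h m p' (m - i - j))))"
            proof -
              have "F m m N + F m N m - F m N N - F m m m =
                (\<Sum>p\<in>UNIV. \<Sum>i\<le>m. pi m p i * (a1 m p (m - i) + (\<Sum>p'\<in>UNIV. \<Sum>j\<le>m - i. g m p p' j * h N p' (m - i - j)))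
                   + pi m p i * (a1 N p (m - i) + (\<Sum>p'\<in>UNIV. \<Sum>j\<le>m - i. g N p p' j * h m p' (m - i - j)))
                   - pi m p i * (a1 N p (m - i) + (\<Sum>p'\<in>UNIV. \<Sum>j\<le>m - i. g N p p' j * h N p' (m - i - j)))
                   - pi m p i * (a1 m p (m - i) + (\<Sum>p'\<in>UNIV. \<Sum>j\<le>m - i. g m p p' j * h m p' (m - i - j))))"
                unfolding dec comb4[symmetric] by simp
              also have "\<dots> = (\<Sum>p\<in>UNIV. \<Sum>i\<le>m. pi m p i *
                ((\<Sum>p'\<in>UNIV. \<Sum>j\<le>m - i. g m p p' j * h N p' (m - i - j))
                 + (\<Sum>p'\<in>UNIV. \<Sum>j\<le>m - i. g N p p' j * h m p' (m - i - j))
                 - (\<Sum>p'\<in>UNIV. \<Sum>j\<le>m - i. g N p p' j * h N p' (m - i - j))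
                 - (\<Sum>p'\<in>UNIV. \<Sum>j\<le>m - i. g m p p' j * h m p' (m - i - j))))"
                by (intro sum.cong refl) (simp add: algebra_simps)
              also have "\<dots> = (\<Sum>p\<in>UNIV. \<Sum>i\<le>m. pi m p i *
                (\<Sum>p'\<in>UNIV. \<Sum>j\<le>m - i. (g m p p' j - g N p p' j) * (h N p' (m - i - j) - h m p' (m - i - j))))"
                by (intro sum.cong refl arg_cong2[where f="(*)"]) (simp only: comb_prod)
              finally show ?thesis .
            qed
            ultimately show ?thesis by linarith
          qed
        qed
      qed
    qed
  qed
  moreover have "\<not> computes_with_prob {0,1,2} {3} V f q0 Qa Qr R3 \<alpha>" if "\<alpha> > 1/2" for \<alpha> :: real
  proof
    assume "computes_with_prob {0,1,2} {3} V f q0 Qa Qr R3 \<alpha>"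
    then have "computes_isolated {0,1,2} {3} V f q0 Qa Qr R3"
      unfolding computes_with_prob_def computes_isolated_def
      by (rule_tac x="1/2" in exI, rule_tac x="\<alpha> - 1/2" in exI) (use that in auto)
    with iso show False by simp
  qed
  ultimately show ?thesis by blast
qed

end
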